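(* Let $m$ be a number and $p\ge 0$ an integer, and suppose the ball $\langle m;-\frac{1}{2^p}\rangle$ is balanced. Then $\langle m;-\frac{1}{2^p}\rangle\mathbin{:}\underline{0}\triangleq\langle m;-\frac{1}{2^{p+1}}\rangle$, and $\langle m;-\frac{1}{2^{p+1}}\rangle$ is also balanced.
   Context: Games are short normal-play combinatorial games, written $\{L\mid R\}$, with disjunctive sum $G+H\cong\{L(G)+H,G+L(H)\mid R(G)+H,G+R(H)\}$ and negation $-G\cong\{-R(G)\mid-L(G)\}$. Ordinal sum: $G\mathbin{:}H\cong\{L(G),\,G\mathbin{:}L(H)\mid R(G),\,G\mathbin{:}R(H)\}$. A number is a game with $G^L<G<G^R$ for all options; values are dyadic rationals. For numbers $m,\Delta$, the ball $\langle m;\Delta\rangle$ is the game $\{x\mid y\}$ with $x,y$ the canonical forms of $m+\Delta$, $m-\Delta$; it is balanced if $\langle m;\Delta\rangle+\langle m;\Delta\rangle=m+m$. $\underline{0}$ is the literal game $1+(-1)\cong\{-1\mid 1\}$ (canonical $1\cong\{0\mid\}$, $-1\cong\{\mid 0\}$). Equivalence modulo domination: $G\triangleq H$ means that in $G+(-H)$, for every move by either player as first player in one summand, the other player has a response in the other summand after which the responder wins. *)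

theory Defs
  imports Main "HOL.Rat"
begin

text \<open>A game form {L | R}; options are given as finite lists (order is irrelevant,
  all notions below only use the sets of options).\<close>
datatype game = Game "game list" "game list"

fun LO :: "game \<Rightarrow> game list" where "LO (Game l r) = l"
fun RO :: "game \<Rightarrow> game list" where "RO (Game l r) = r"

fun gneg :: "game \<Rightarrow> game" where
  "gneg (Game l r) = Game (map gneg r) (map gneg l)"

function gsum :: "game \<Rightarrow> game \<Rightarrow> game" where
  "gsum (Game gl gr) (Game hl hr) =
     Game (map (\<lambda>x. gsum x (Game hl hr)) gl @ map (\<lambda>y. gsum (Game gl gr) y) hl)
          (map (\<lambda>x. gsum x (Game hl hr)) gr @ map (\<lambda>y. gsum (Game gl gr) y) hr)"
  by pat_completeness auto
termination
  by (relation "measure (\<lambda>(g, h). size g + size h)")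
     (auto, (metis le_imp_less_Suc le_refl size_list_estimation' trans_le_add1 trans_le_add2)+)

fun osum :: "game \<Rightarrow> game \<Rightarrow> game" where
  "osum g (Game hl hr) = Game (LO g @ map (osum g) hl) (RO g @ map (osum g) hr)"

text \<open>Normal play: \<open>wins True G\<close> means Left, moving first in G, has a winning
  strategy; \<open>wins False G\<close> the same for Right.\<close>
fun wins :: "bool \<Rightarrow> game \<Rightarrow> bool" where
  "wins True (Game l r) = (\<exists>x\<in>set l. \<not> wins False x)"
| "wins False (Game l r) = (\<exists>x\<in>set r. \<not> wins True x)"

definition gge :: "game \<Rightarrow> game \<Rightarrow> bool" where
  "gge g h \<longleftrightarrow> \<not> wins False (gsum g (gneg h))"

definition geq :: "game \<Rightarrow> game \<Rightarrow> bool" where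
  "geq g h \<longleftrightarrow> gge g h \<and> gge h g"

definition dyadic :: "rat \<Rightarrow> bool" where
  "dyadic q \<longleftrightarrow> (\<exists>a::int. \<exists>k::nat. q = of_int a / 2 ^ k)"

fun natg :: "nat \<Rightarrow> game" where
  "natg 0 = Game [] []"
| "natg (Suc n) = Game [natg n] []"

definition intg :: "int \<Rightarrow> game" where
  "intg a = (if a \<ge> 0 then natg (nat a) else gneg (natg (nat (- a))))"

text \<open>\<open>dyg a k\<close> is the canonical form of a/2^k: for odd a and k \<ge> 1 it is
  {(a-1)/2^k | (a+1)/2^k} (in canonical form).\<close>
fun dyg :: "int \<Rightarrow> nat \<Rightarrow> game" where
  "dyg a 0 = intg a"
| "dyg a (Suc k) = (if even a then dyg (a div 2) k
                    else Game [dyg ((a - 1) div 2) k] [dyg ((a + 1) div 2) k])"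

definition canon :: "rat \<Rightarrow> game" where
  "canon q = (let k = (LEAST k::nat. \<exists>a::int. q = of_int a / 2 ^ k)
              in dyg \<lfloor>q * 2 ^ k\<rfloor> k)"

definition ball :: "rat \<Rightarrow> rat \<Rightarrow> game" where
  "ball m d = Game [canon (m + d)] [canon (m - d)]"

definition balanced :: "rat \<Rightarrow> rat \<Rightarrow> bool" where
  "balanced m d \<longleftrightarrow> geq (gsum (ball m d) (ball m d)) (gsum (canon m) (canon m))"

text \<open>The literal game 1 + (-1) (which is {-1 | 1}).\<close>
definition zero_u :: game where
  "zero_u = gsum (canon 1) (gneg (canon 1))"

text \<open>G \<triangleq> H: in G + (-H), every first move by either player in one summand has an
  answer by the other player in the other summand after which the responder wins
  (i.e. the player to move next, moving first, loses).  Note L(-H) = -R(H) and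
  R(-H) = -L(H).\<close>
definition dom_equiv :: "game \<Rightarrow> game \<Rightarrow> bool" where
  "dom_equiv g h \<longleftrightarrow>
     (\<forall>gl\<in>set (LO g). \<exists>hl\<in>set (LO h). \<not> wins True (gsum gl (gneg hl))) \<and>
     (\<forall>hr\<in>set (RO h). \<exists>gr\<in>set (RO g). \<not> wins True (gsum gr (gneg hr))) \<and>
     (\<forall>gr\<in>set (RO g). \<exists>hr\<in>set (RO h). \<not> wins False (gsum gr (gneg hr))) \<and>
     (\<forall>hl\<in>set (LO h). \<exists>gl\<in>set (LO g). \<not> wins False (gsum gl (gneg hl)))"

end

theory Submission
  imports Defs
begin

lemma size_LO: "x \<in> set (LO g) \<Longrightarrow> size x < size g"
proof (cases g)
  case (Game l r)
  assume "x \<in> set (LO g)"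
  then have "size x \<le> size_list size l" using Game by (auto intro: size_list_estimation')
  then show ?thesis using Game by simp
qed

lemma size_RO: "x \<in> set (RO g) \<Longrightarrow> size x < size g"
proof (cases g)
  case (Game l r)
  assume "x \<in> set (RO g)"
  then have "size x \<le> size_list size r" using Game by (auto intro: size_list_estimation')
  then show ?thesis using Game by simp
qed

lemma LO_gsum: "LO (gsum g h) = map (\<lambda>x. gsum x h) (LO g) @ map (gsum g) (LO h)"
  by (cases g; cases h) auto

lemma RO_gsum: "RO (gsum g h) = map (\<lambda>x. gsum x h) (RO g) @ map (gsum g) (RO h)"
  by (cases g; cases h) auto

lemma LO_gneg: "LO (gneg g) = map gneg (RO g)" by (cases g) auto
lemma RO_gneg: "RO (gneg g) = map gneg (LO g)" by (cases g) auto

lemma winsT: "wins True g = (\<exists>x\<in>set (LO g). \<not> wins False x)" by (cases g) auto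
lemma winsF: "wins False g = (\<exists>x\<in>set (RO g). \<not> wins True x)" by (cases g) auto

lemma gneg_gneg[simp]: "gneg (gneg g) = g"
  by (induction g) (auto simp: map_idI)

lemma gneg_gsum: "gneg (gsum g h) = gsum (gneg g) (gneg h)"
  by (induction g h rule: gsum.induct) auto

lemma wins_gneg: "wins b (gneg g) = wins (\<not> b) g"
  by (induction g arbitrary: b) (case_tac b; auto)+

lemma wins_comm: "wins b (gsum x y) = wins b (gsum y x)"
proof (induction "size x + size y" arbitrary: x y b rule: less_induct)
  case less
  have IH: "\<And>x' y' c. size x' + size y' < size x + size y \<Longrightarrow> wins c (gsum x' y') = wins c (gsum y' x')"
    using less by blast
  show ?case
  proof (cases b)
    case True
    have "wins True (gsum x y) = ((\<exists>u\<in>set (LO x). \<not> wins False (gsum u y)) \<or> (\<exists>u\<in>set (LO y). \<not> wins False (gsum x u)))"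
      by (auto simp: winsT LO_gsum)
    also have "\<dots> = ((\<exists>u\<in>set (LO x). \<not> wins False (gsum y u)) \<or> (\<exists>u\<in>set (LO y). \<not> wins False (gsum u x)))"
      using IH size_LO by (smt (verit) add_less_mono1 add_strict_left_mono)
    also have "\<dots> = wins True (gsum y x)"
      by (auto simp: winsT LO_gsum)
    finally show ?thesis using True by simp
  next
    case False
    have "wins False (gsum x y) = ((\<exists>u\<in>set (RO x). \<not> wins True (gsum u y)) \<or> (\<exists>u\<in>set (RO y). \<not> wins True (gsum x u)))"
      by (auto simp: winsF RO_gsum)
    also have "\<dots> = ((\<exists>u\<in>set (RO x). \<not> wins True (gsum y u)) \<or> (\<exists>u\<in>set (RO y). \<not> wins True (gsum u x)))"
      using IH size_RO by (smt (verit) add_less_mono1 add_strict_left_mono)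
    also have "\<dots> = wins False (gsum y x)"
      by (auto simp: winsF RO_gsum)
    finally show ?thesis using False by simp
  qed
qed

lemma notwinsT: "(\<not> wins True (gsum x (gneg y))) = gge y x"
proof -
  have "wins True (gsum x (gneg y)) = wins False (gneg (gsum x (gneg y)))" by (simp add: wins_gneg)
  also have "\<dots> = wins False (gsum y (gneg x))" by (simp add: gneg_gsum wins_comm)
  finally show ?thesis by (simp add: gge_def)
qed

lemma gge_conway: "gge g h = ((\<forall>r\<in>set (RO g). \<not> gge h r) \<and> (\<forall>l\<in>set (LO h). \<not> gge l g))"
proof -
  have "gge g h = (\<not> (\<exists>x\<in>set (RO (gsum g (gneg h))). \<not> wins True x))"
    by (simp add: gge_def winsF)
  also have "\<dots> = ((\<forall>r\<in>set (RO g). wins True (gsum r (gneg h))) \<and> (\<forall>l\<in>set (LO h). wins True (gsum g (gneg l))))"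
    by (auto simp: RO_gsum RO_gneg)
  also have "\<dots> = ((\<forall>r\<in>set (RO g). \<not> gge h r) \<and> (\<forall>l\<in>set (LO h). \<not> gge l g))"
    by (simp add: notwinsT[symmetric])
  finally show ?thesis .
qed

lemma gge_refl: "gge g g"
proof (induction g rule: game.induct)
  case (Game l r)
  show ?case
  proof (subst gge_conway, intro conjI ballI notI)
    fix x assume x: "x \<in> set (RO (Game l r))" and "gge (Game l r) x"
    then show False using Game(2)[of x] by (subst (asm) gge_conway) auto
  next
    fix x assume x: "x \<in> set (LO (Game l r))" and "gge x (Game l r)"
    then show False using Game(1)[of x] by (subst (asm) gge_conway) auto
  qed
qed

lemma not_gge_RO: "r \<in> set (RO g) \<Longrightarrow> \<not> gge g r"
  by (subst gge_conway) (auto intro: gge_refl)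

lemma not_gge_LO: "l \<in> set (LO g) \<Longrightarrow> \<not> gge l g"
  by (subst gge_conway) (auto intro: gge_refl)

lemma gge_trans: "gge g h \<Longrightarrow> gge h k \<Longrightarrow> gge g k"
proof (induction "size g + size h + size k" arbitrary: g h k rule: less_induct)
  case less
  show ?case
  proof (subst gge_conway, intro conjI ballI notI)
    fix r assume r: "r \<in> set (RO g)" and "gge k r"
    with less(1)[of h k r] less(3) size_RO[OF r] have "gge h r" by auto
    with less(2) r show False by (subst (asm) gge_conway) auto
  next
    fix l assume l: "l \<in> set (LO k)" and "gge l g"
    with less(1)[of l g h] less(2) size_LO[OF l] have "gge l h" by auto
    with less(3)[unfolded gge_conway[of h k]] l show False by auto
  qed
qed

lemma gsum_compat_aux:
  "(gge g h \<longrightarrow> gge (gsum g k) (gsum h k)) \<and> (gge (gsum g k) (gsum h k) \<longrightarrow> gge g h)"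
proof (induction "size g + size h + size k" arbitrary: g h k rule: less_induct)
  case less
  have IH: "\<And>g' h' k'. size g' + size h' + size k' < size g + size h + size k \<Longrightarrow>
     (gge g' h' \<longrightarrow> gge (gsum g' k') (gsum h' k')) \<and> (gge (gsum g' k') (gsum h' k') \<longrightarrow> gge g' h')"
    using less by blast
  show ?case
  proof (intro conjI impI)
    assume gh: "gge g h"
    show "gge (gsum g k) (gsum h k)"
    proof (subst gge_conway, intro conjI ballI notI)
      fix r assume r: "r \<in> set (RO (gsum g k))" and hr: "gge (gsum h k) r"
      from r consider (a) gr where "gr \<in> set (RO g)" "r = gsum gr k"
        | (b) kr where "kr \<in> set (RO k)" "r = gsum g kr" by (auto simp: RO_gsum)
      then show False
      proof cases
        case a
        with IH[of h gr k] size_RO[OF a(1)] hr have "gge h gr" by auto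
        with gh a(1) show False by (subst (asm) gge_conway) auto
      next
        case b
        with IH[of g h kr] size_RO[OF b(1)] gh have "gge (gsum g kr) (gsum h kr)" by auto
        with hr b have "gge (gsum h k) (gsum h kr)" using gge_trans by blast
        moreover have "gsum h kr \<in> set (RO (gsum h k))" using b by (auto simp: RO_gsum)
        ultimately show False using not_gge_RO by blast
      qed
    next
      fix l assume l: "l \<in> set (LO (gsum h k))" and hl: "gge l (gsum g k)"
      from l consider (a) hl' where "hl' \<in> set (LO h)" "l = gsum hl' k"
        | (b) kl where "kl \<in> set (LO k)" "l = gsum h kl" by (auto simp: LO_gsum)
      then show False
      proof cases
        case a
        with IH[of hl' g k] size_LO[OF a(1)] hl have "gge hl' g" by auto
        with gh a(1) show False by (subst (asm) gge_conway) auto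
      next
        case b
        with IH[of g h kl] size_LO[OF b(1)] gh have "gge (gsum g kl) (gsum h kl)" by auto
        with hl b have "gge (gsum g kl) (gsum g k)" using gge_trans by blast
        moreover have "gsum g kl \<in> set (LO (gsum g k))" using b by (auto simp: LO_gsum)
        ultimately show False using not_gge_LO by blast
      qed
    qed
  next
    assume gh: "gge (gsum g k) (gsum h k)"
    show "gge g h"
    proof (subst gge_conway, intro conjI ballI notI)
      fix r assume r: "r \<in> set (RO g)" and hr: "gge h r"
      with IH[of h r k] size_RO[OF r] have "gge (gsum h k) (gsum r k)" by auto
      moreover have "gsum r k \<in> set (RO (gsum g k))" using r by (auto simp: RO_gsum)
      ultimately show False using gh by (subst (asm) gge_conway) auto
    next
      fix l assume l: "l \<in> set (LO h)" and hl: "gge l g"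
      with IH[of l g k] size_LO[OF l] have "gge (gsum l k) (gsum g k)" by auto
      moreover have "gsum l k \<in> set (LO (gsum h k))" using l by (auto simp: LO_gsum)
      ultimately show False using gh by (subst (asm) gge_conway) auto
    qed
  qed
qed

lemma gsum_compat: "gge (gsum g k) (gsum h k) = gge g h"
  using gsum_compat_aux by blast

lemma gsum_comm_ge: "gge (gsum x y) (gsum y x)"
proof (induction "size x + size y" arbitrary: x y rule: less_induct)
  case less
  have IH: "\<And>x' y'. size x' + size y' < size x + size y \<Longrightarrow> gge (gsum x' y') (gsum y' x')"
    using less by blast
  show ?case
  proof (subst gge_conway, intro conjI ballI notI)
    fix r assume r: "r \<in> set (RO (gsum x y))" and hr: "gge (gsum y x) r"
    from r consider (a) xr where "xr \<in> set (RO x)" "r = gsum xr y"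
      | (b) yr where "yr \<in> set (RO y)" "r = gsum x yr" by (auto simp: RO_gsum)
    then show False
    proof cases
      case a
      with IH[of xr y] size_RO[OF a(1)] have "gge r (gsum y xr)" by auto
      with hr have "gge (gsum y x) (gsum y xr)" using gge_trans by blast
      moreover have "gsum y xr \<in> set (RO (gsum y x))" using a by (auto simp: RO_gsum)
      ultimately show False using not_gge_RO by blast
    next
      case b
      with IH[of x yr] size_RO[OF b(1)] have "gge r (gsum yr x)" by auto
      with hr have "gge (gsum y x) (gsum yr x)" using gge_trans by blast
      moreover have "gsum yr x \<in> set (RO (gsum y x))" using b by (auto simp: RO_gsum)
      ultimately show False using not_gge_RO by blast
    qed
  next
    fix l assume l: "l \<in> set (LO (gsum y x))" and hl: "gge l (gsum x y)"
    from l consider (a) yl where "yl \<in> set (LO y)" "l = gsum yl x"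
      | (b) xl where "xl \<in> set (LO x)" "l = gsum y xl" by (auto simp: LO_gsum)
    then show False
    proof cases
      case a
      with IH[of x yl] size_LO[OF a(1)] have "gge (gsum x yl) l" by auto
      with hl have "gge (gsum x yl) (gsum x y)" using gge_trans by blast
      moreover have "gsum x yl \<in> set (LO (gsum x y))" using a by (auto simp: LO_gsum)
      ultimately show False using not_gge_LO by blast
    next
      case b
      with IH[of xl y] size_LO[OF b(1)] have "gge (gsum xl y) l" by auto
      with hl have "gge (gsum xl y) (gsum x y)" using gge_trans by blast
      moreover have "gsum xl y \<in> set (LO (gsum x y))" using b by (auto simp: LO_gsum)
      ultimately show False using not_gge_LO by blast
    qed
  qed
qed

lemma gsum_compat_left: "gge (gsum k g) (gsum k h) = gge g h"
proof -
  have "gge (gsum k g) (gsum k h) = gge (gsum g k) (gsum h k)"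
    using gsum_comm_ge gge_trans by meson
  then show ?thesis using gsum_compat by simp
qed

definition mult :: "nat \<Rightarrow> rat \<Rightarrow> bool" where
  "mult j q \<longleftrightarrow> (\<exists>a::int. q = of_int a / 2 ^ j)"

definition expo :: "rat \<Rightarrow> nat" where
  "expo q = (LEAST k::nat. \<exists>a::int. q = of_int a / 2 ^ k)"

lemma dyadic_mult: "dyadic q = (\<exists>j. mult j q)"
  by (auto simp: dyadic_def mult_def)

lemma mult_mono: assumes "mult j q" "j \<le> j'" shows "mult j' q"
proof -
  obtain a where a: "q = of_int a / 2 ^ j" using assms by (auto simp: mult_def)
  have "(2::rat) ^ j' = 2 ^ j * 2 ^ (j' - j)" using assms(2) by (simp add: power_add[symmetric])
  then have "q = of_int (a * 2 ^ (j' - j)) / 2 ^ j'" using a by simp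
  then show ?thesis unfolding mult_def by blast
qed

lemma mult_expo: "dyadic q \<Longrightarrow> mult (expo q) q"
  unfolding expo_def mult_def dyadic_def by (rule LeastI_ex) auto

lemma expo_le: "mult j q \<Longrightarrow> expo q \<le> j"
  unfolding expo_def mult_def by (rule Least_le) auto

lemma mult_iff: "dyadic q \<Longrightarrow> mult j q = (expo q \<le> j)"
  using mult_mono mult_expo expo_le by blast

lemma mult_int: "mult j q \<Longrightarrow> q * 2 ^ j = of_int \<lfloor>q * 2 ^ j\<rfloor>"
  by (auto simp: mult_def)

lemma mult_add: "mult j q \<Longrightarrow> mult j r \<Longrightarrow> mult j (q + r)"
  by (auto simp: mult_def add_divide_distrib[symmetric] intro: exI[of _ "_ + _"])

lemma mult_diff: "mult j q \<Longrightarrow> mult j r \<Longrightarrow> mult j (q - r)"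
  by (auto simp: mult_def diff_divide_distrib[symmetric] intro: exI[of _ "_ - _"])

lemma mult_pow: "j \<le> k \<Longrightarrow> mult k (1 / 2 ^ j)"
  using mult_mono[of j "1/2^j" k] by (auto simp: mult_def intro: exI[of _ 1])

lemma mult_step: assumes "mult k q" "mult k r" "q < r" shows "q + 1 / 2 ^ k \<le> r"
proof -
  obtain a b where a: "q = of_int a / 2 ^ k" and b: "r = of_int b / 2 ^ k"
    using assms by (auto simp: mult_def)
  have "of_int a < (of_int b :: rat)" using assms(3) a b by (simp add: divide_less_cancel)
  then have "a < b" by simp
  then have "a + 1 \<le> b" by simp
  then have "(of_int (a + 1) :: rat) / 2 ^ k \<le> of_int b / 2 ^ k"
    by (intro divide_right_mono) (simp_all)
  then show ?thesis using a b by (simp add: add_divide_distrib)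
qed

lemma dyg_scale: "dyg (a * 2 ^ n) (k + n) = dyg a k"
proof (induction n)
  case 0 then show ?case by simp
next
  case (Suc n)
  have "dyg (a * 2 ^ Suc n) (k + Suc n) = dyg (a * 2 ^ Suc n div 2) (k + n)" by simp
  also have "a * 2 ^ Suc n div 2 = a * 2 ^ n" by simp
  finally show ?case using Suc by simp
qed

lemma canon_expo: "canon q = dyg \<lfloor>q * 2 ^ expo q\<rfloor> (expo q)"
  by (simp add: canon_def expo_def Let_def)

lemma canon_dyg: "canon (of_int a / 2 ^ k) = dyg a k"
proof -
  define q where "q = (of_int a / 2 ^ k :: rat)"
  have mk: "mult k q" by (auto simp: mult_def q_def)
  then have e: "expo q \<le> k" by (rule expo_le)
  have de: "dyadic q" using mk dyadic_mult by blast
  define b where "b = \<lfloor>q * 2 ^ expo q\<rfloor>"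
  have qb: "q * 2 ^ expo q = of_int b" using mult_int[OF mult_expo[OF de]] b_def by simp
  have h2: "(2::rat) ^ k = 2 ^ expo q * 2 ^ (k - expo q)" using e by (simp add: power_add[symmetric])
  have "of_int a = q * 2 ^ k" by (simp add: q_def)
  then have "of_int a = q * 2 ^ expo q * 2 ^ (k - expo q)" using h2 by (simp add: mult.assoc)
  then have "of_int a = (of_int (b * 2 ^ (k - expo q)) :: rat)" using qb by simp
  then have "a = b * 2 ^ (k - expo q)" using of_int_eq_iff by blast
  then have "dyg a k = dyg b (expo q)" using dyg_scale[of b "k - expo q" "expo q"] e by simp
  then show ?thesis using canon_expo[of q] b_def q_def by simp
qed

lemma canon_int: "canon (of_int a) = intg a"
  using canon_dyg[of a 0] by simp

definition lv :: "rat \<Rightarrow> rat list" where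
  "lv q = (if expo q = 0 then (if 0 < q then [q - 1] else []) else [q - 1 / 2 ^ expo q])"

definition rv :: "rat \<Rightarrow> rat list" where
  "rv q = (if expo q = 0 then (if q < 0 then [q + 1] else []) else [q + 1 / 2 ^ expo q])"

lemma intg_struct: "intg a = Game (if 0 < a then [intg (a - 1)] else []) (if a < 0 then [intg (a + 1)] else [])"
proof -
  consider "0 < a" | "a = 0" | "a = -1" | "a < -1" by linarith
  then show ?thesis
  proof cases
    case 1
    then obtain n where "nat a = Suc n" by (metis gr0_implies_Suc zero_less_nat_eq)
    moreover have "nat (a - 1) = n" using calculation by simp
    ultimately show ?thesis using 1 by (simp add: intg_def)
  next
    case 2 then show ?thesis by (simp add: intg_def)
  next
    case 3 then show ?thesis by (simp add: intg_def)
  next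
    case 4
    then obtain n where "nat (-a) = Suc n" by (metis gr0_implies_Suc zero_less_nat_eq neg_0_less_iff_less less_trans neg_less_0_iff_less zero_less_one)
    moreover have "nat (- (a + 1)) = n" using calculation by simp
    ultimately show ?thesis using 4 by (simp add: intg_def)
  qed
qed

lemma canon_struct: assumes "dyadic q"
  shows "canon q = Game (map canon (lv q)) (map canon (rv q))"
proof -
  define k where "k = expo q"
  define a where "a = \<lfloor>q * 2 ^ k\<rfloor>"
  have qa: "q = of_int a / 2 ^ k" using mult_int[OF mult_expo[OF assms]] unfolding k_def a_def
    by (metis nonzero_eq_divide_eq power_not_zero zero_neq_numeral)
  have ck: "canon q = dyg a k" using qa canon_dyg by simp
  show ?thesis
  proof (cases k)
    case 0
    then have q: "q = of_int a" using qa by simp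
    have "canon q = intg a" using ck 0 by simp
    also have "\<dots> = Game (map canon (lv q)) (map canon (rv q))"
      apply (subst intg_struct)
      using 0 k_def q canon_int[of "a - 1"] canon_int[of "a + 1"] by (auto simp: lv_def rv_def)
    finally show ?thesis .
  next
    case (Suc k')
    have odd: "odd a"
    proof
      assume "even a"
      then obtain c where c: "a = 2 * c" by blast
      have "q = of_int c / 2 ^ k'" using qa c Suc by simp
      then have "expo q \<le> k'" by (intro expo_le) (auto simp: mult_def)
      then show False using k_def Suc by simp
    qed
    have e1: "of_int ((a - 1) div 2) / 2 ^ k' = q - 1 / 2 ^ k"
    proof -
      have "of_int ((a - 1) div 2) = (of_int (a - 1) / 2 :: rat)"
        using odd by (auto elim!: oddE)
      then show ?thesis using qa Suc by (simp add: field_simps)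
    qed
    have e2: "of_int ((a + 1) div 2) / 2 ^ k' = q + 1 / 2 ^ k"
    proof -
      have "of_int ((a + 1) div 2) = (of_int (a + 1) / 2 :: rat)"
        using odd by (auto elim!: oddE)
      then show ?thesis using qa Suc by (simp add: field_simps)
    qed
    have "canon q = Game [dyg ((a - 1) div 2) k'] [dyg ((a + 1) div 2) k']"
      using ck Suc odd by simp
    also have "\<dots> = Game [canon (q - 1 / 2 ^ k)] [canon (q + 1 / 2 ^ k)]"
      using canon_dyg[of "(a - 1) div 2" k'] canon_dyg[of "(a + 1) div 2" k'] e1 e2 by simp
    finally show ?thesis using Suc k_def by (simp add: lv_def rv_def)
  qed
qed

lemma lv_props: assumes "dyadic q" "x \<in> set (lv q)" shows "x < q" "dyadic x"
proof -
  have m: "mult (expo q) q" using mult_expo[OF assms(1)] .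
  show "x < q" using assms(2) by (auto simp: lv_def split: if_splits)
  have "mult (expo q) x"
    using assms(2) m mult_diff[OF m mult_pow[of "expo q" "expo q"]] mult_diff[OF m, of 1]
    by (auto simp: lv_def mult_def split: if_splits intro: exI[of _ 1])
  then show "dyadic x" using dyadic_mult by blast
qed

lemma rv_props: assumes "dyadic q" "x \<in> set (rv q)" shows "q < x" "dyadic x"
proof -
  have m: "mult (expo q) q" using mult_expo[OF assms(1)] .
  show "q < x" using assms(2) by (auto simp: rv_def split: if_splits)
  have "mult (expo q) x"
    using assms(2) m mult_add[OF m mult_pow[of "expo q" "expo q"]] mult_add[OF m, of 1]
    by (auto simp: rv_def mult_def split: if_splits intro: exI[of _ 1])
  then show "dyadic x" using dyadic_mult by blast
qed

lemma nesting: assumes dq: "dyadic q" and dr: "dyadic r" and lt: "q < r"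
  shows "(\<exists>y\<in>set (rv q). y \<le> r) \<or> (\<exists>x\<in>set (lv r). q \<le> x)"
proof -
  define k where "k = expo q"
  define j where "j = expo r"
  have mq: "mult k q" using mult_expo[OF dq] k_def by simp
  have mr: "mult j r" using mult_expo[OF dr] j_def by simp
  show ?thesis
  proof (cases "j > 0")
    case True
    have lvr: "lv r = [r - 1 / 2 ^ j]" using True j_def by (simp add: lv_def)
    show ?thesis
    proof (cases "q \<le> r - 1 / 2 ^ j")
      case True then show ?thesis using lvr by simp
    next
      case False
      have mr1: "mult j (r - 1 / 2 ^ j)" using mult_diff[OF mr mult_pow[of j j]] by simp
      have "\<not> mult j q"
      proof
        assume "mult j q"
        from mult_step[OF mr1 this] False have "r \<le> q" by simp
        with lt show False by simp
      qed
      then have kj: "j < k" using mult_iff[OF dq] k_def by simp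
      then have "rv q = [q + 1 / 2 ^ k]" using k_def by (simp add: rv_def)
      moreover have "q + 1 / 2 ^ k \<le> r" using mult_step[OF mq mult_mono[OF mr] lt] kj by simp
      ultimately show ?thesis by simp
    qed
  next
    case jF: False
    show ?thesis
    proof (cases "k > 0")
      case True
      have rvq: "rv q = [q + 1 / 2 ^ k]" using True k_def by (simp add: rv_def)
      show ?thesis
      proof (cases "q + 1 / 2 ^ k \<le> r")
        case True then show ?thesis using rvq by simp
      next
        case False
        have "mult k r" using mult_mono[OF mr] jF True by simp
        from mult_step[OF mq this lt] False show ?thesis by simp
      qed
    next
      case False
      then have k0: "k = 0" and j0: "j = 0" using jF by auto
      have m0: "mult 0 q" "mult 0 r" using mq mr k0 j0 by simp_all
      have q1: "q + 1 \<le> r" using mult_step[OF m0 lt] by simp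
      show ?thesis
      proof (cases "0 < r")
        case True
        have "lv r = [r - 1]" using True j0 j_def by (simp add: lv_def)
        moreover have "q + 1 \<le> r" using q1 .
        ultimately show ?thesis by auto
      next
        case False
        have "rv q = [q + 1]" using False lt k0 k_def by (simp add: rv_def)
        moreover have "q + 1 \<le> r" using q1 .
        ultimately show ?thesis by auto
      qed
    qed
  qed
qed

lemma size_canon_lv: "dyadic q \<Longrightarrow> x \<in> set (lv q) \<Longrightarrow> size (canon x) < size (canon q)"
  using size_LO[of "canon x" "canon q"] canon_struct[of q] by simp

lemma size_canon_rv: "dyadic q \<Longrightarrow> x \<in> set (rv q) \<Longrightarrow> size (canon x) < size (canon q)"
  using size_RO[of "canon x" "canon q"] canon_struct[of q] by simp

lemma canon_ge: "dyadic q \<Longrightarrow> dyadic r \<Longrightarrow> gge (canon q) (canon r) = (r \<le> q)"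
proof (induction "size (canon q) + size (canon r)" arbitrary: q r rule: less_induct)
  case less
  have "gge (canon q) (canon r) =
    ((\<forall>y\<in>set (rv q). \<not> gge (canon r) (canon y)) \<and> (\<forall>x\<in>set (lv r). \<not> gge (canon x) (canon q)))"
    by (subst gge_conway) (simp add: canon_struct[OF less(2)] canon_struct[OF less(3)])
  also have "\<dots> = ((\<forall>y\<in>set (rv q). \<not> y \<le> r) \<and> (\<forall>x\<in>set (lv r). \<not> q \<le> x))"
  proof -
    have "\<forall>y\<in>set (rv q). gge (canon r) (canon y) = (y \<le> r)"
      using less(1) size_canon_rv[OF less(2)] rv_props[OF less(2)] less(3) by fastforce
    moreover have "\<forall>x\<in>set (lv r). gge (canon x) (canon q) = (q \<le> x)"
      using less(1) size_canon_lv[OF less(3)] lv_props[OF less(3)] less(2) by fastforce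
    ultimately show ?thesis by simp
  qed
  also have "\<dots> = (r \<le> q)"
  proof
    assume h: "(\<forall>y\<in>set (rv q). \<not> y \<le> r) \<and> (\<forall>x\<in>set (lv r). \<not> q \<le> x)"
    show "r \<le> q"
    proof (rule ccontr)
      assume "\<not> r \<le> q"
      then show False using nesting[OF less(2,3)] h by auto
    qed
  next
    assume "r \<le> q"
    then show "(\<forall>y\<in>set (rv q). \<not> y \<le> r) \<and> (\<forall>x\<in>set (lv r). \<not> q \<le> x)"
      using rv_props[OF less(2)] lv_props[OF less(3)] by fastforce
  qed
  finally show ?case .
qed

lemma simp_eq:
  assumes "dyadic l" "dyadic c" "dyadic r" "l < c" "c < r"
    and "\<forall>x\<in>set (lv c). x \<le> l" "\<forall>y\<in>set (rv c). r \<le> y"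
  shows "gge (Game [canon l] [canon r]) (canon c)" "gge (canon c) (Game [canon l] [canon r])"
proof -
  show "gge (Game [canon l] [canon r]) (canon c)"
  proof (subst gge_conway, intro conjI ballI)
    fix x assume "x \<in> set (RO (Game [canon l] [canon r]))"
    then show "\<not> gge (canon c) x" using canon_ge assms by auto
  next
    fix x assume "x \<in> set (LO (canon c))"
    then obtain v where v: "v \<in> set (lv c)" "x = canon v" using canon_struct[OF assms(2)] by auto
    have "gge (canon l) (canon v)" using canon_ge lv_props[OF assms(2) v(1)] assms v by auto
    then show "\<not> gge x (Game [canon l] [canon r])" using v by (subst gge_conway) auto
  qed
  show "gge (canon c) (Game [canon l] [canon r])"
  proof (subst gge_conway, intro conjI ballI)
    fix x assume "x \<in> set (RO (canon c))"
    then obtain v where v: "v \<in> set (rv c)" "x = canon v" using canon_struct[OF assms(2)] by auto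
    have "gge (canon v) (canon r)" using canon_ge rv_props[OF assms(2) v(1)] assms v by auto
    then show "\<not> gge (Game [canon l] [canon r]) x" using v by (subst gge_conway) auto
  next
    fix x assume "x \<in> set (LO (Game [canon l] [canon r]))"
    then show "\<not> gge x (canon c)" using canon_ge assms by auto
  qed
qed

lemma lv_bound: "dyadic c \<Longrightarrow> mult j c \<Longrightarrow> x \<in> set (lv c) \<Longrightarrow> x \<le> c - 1 / 2 ^ j"
proof -
  assume a: "dyadic c" "mult j c" "x \<in> set (lv c)"
  have e: "expo c \<le> j" using a mult_iff by blast
  have "(1::rat) / 2 ^ j \<le> 1 / 2 ^ expo c"
    using e by (intro divide_left_mono power_increasing) auto
  moreover have "(1::rat) / 2 ^ j \<le> 1" by simp
  ultimately show ?thesis using a(3) by (auto simp: lv_def split: if_splits)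
qed

lemma rv_bound: "dyadic c \<Longrightarrow> mult j c \<Longrightarrow> x \<in> set (rv c) \<Longrightarrow> c + 1 / 2 ^ j \<le> x"
proof -
  assume a: "dyadic c" "mult j c" "x \<in> set (rv c)"
  have e: "expo c \<le> j" using a mult_iff by blast
  have "(1::rat) / 2 ^ j \<le> 1 / 2 ^ expo c"
    using e by (intro divide_left_mono power_increasing) auto
  moreover have "(1::rat) / 2 ^ j \<le> 1" by simp
  ultimately show ?thesis using a(3) by (auto simp: rv_def split: if_splits)
qed

lemma mult_dyadic: "mult j q \<Longrightarrow> dyadic q" using dyadic_mult by blast

lemma ball_eq_m:
  assumes "mult p m"
  shows "gge (Game [canon (m - 1/2^p)] [canon (m + 1/2^p)]) (canon m)"
        "gge (canon m) (Game [canon (m - 1/2^p)] [canon (m + 1/2^p)])"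
proof -
  have d: "mult p (1/2^p)" using mult_pow by simp
  have dm: "dyadic m" "dyadic (m - 1/2^p)" "dyadic (m + 1/2^p)"
    using assms mult_diff[OF assms d] mult_add[OF assms d] mult_dyadic by blast+
  have "\<forall>x\<in>set (lv m). x \<le> m - 1/2^p" using lv_bound[OF dm(1) assms] by blast
  moreover have "\<forall>x\<in>set (rv m). m + 1/2^p \<le> x" using rv_bound[OF dm(1) assms] by blast
  ultimately show "gge (Game [canon (m - 1/2^p)] [canon (m + 1/2^p)]) (canon m)"
        "gge (canon m) (Game [canon (m - 1/2^p)] [canon (m + 1/2^p)])"
    using simp_eq[OF dm(2,1,3)] by auto
qed

lemma double_ge: "gge a b \<Longrightarrow> gge (gsum a a) (gsum b b)"
  using gsum_compat_left[of a a b] gsum_compat[of a b b] gge_trans by blast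

lemma exists_c:
  assumes "dyadic m" "\<not> mult p m"
  shows "\<exists>c. dyadic c \<and> c \<noteq> m \<and> m - 1/2^p < c \<and> c < m + 1/2^p \<and>
     (\<forall>x\<in>set (lv c). x \<le> m - 1/2^p) \<and> (\<forall>y\<in>set (rv c). m + 1/2^p \<le> y)"
proof -
  define t where "t = m * 2 ^ p"
  define n where "n = \<lfloor>t\<rfloor>"
  have n1: "of_int n \<le> t" "t < of_int n + 1" using n_def by linarith+
  have n2: "of_int n \<noteq> t"
  proof
    assume "of_int n = t"
    then have "m = of_int n / 2 ^ p" using t_def by (simp add: field_simps)
    then show False using assms(2) by (auto simp: mult_def)
  qed
  have pos: "(0::rat) < 2 ^ p" by simp
  have e1: "m - 1/2^p = (t - 1) / 2^p" "m = t / 2^p" "m + 1/2^p = (t + 1) / 2^p"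
    unfolding t_def by (simp_all add: field_simps)
  have lt: "t - 1 < of_int n" "of_int n < t" "t < of_int (n+1)" "of_int (n+1) < t + 1"
    using n1 n2 by auto
  have c1: "m - 1/2^p < of_int n / 2^p" "of_int n / 2^p < m"
    by (subst e1(1), rule divide_strict_right_mono[OF lt(1) pos], subst e1(2), rule divide_strict_right_mono[OF lt(2) pos])
  have c2: "m < of_int (n+1) / 2^p" "of_int (n+1) / 2^p < m + 1/2^p"
    by (subst e1(2), rule divide_strict_right_mono[OF lt(3) pos], subst e1(3), rule divide_strict_right_mono[OF lt(4) pos])
  show ?thesis
  proof (cases p)
    case 0
    show ?thesis
    proof (cases "n \<ge> 0")
      case True
      define c where "c = (of_int n :: rat)"
      have mc: "mult 0 c" by (auto simp: mult_def c_def)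
      have ec: "expo c = 0" using expo_le[OF mc] by simp
      have "\<forall>x\<in>set (lv c). x \<le> m - 1/2^p"
      proof
        fix x assume x: "x \<in> set (lv c)"
        have "x \<le> c - 1" using lv_bound[OF mult_dyadic[OF mc] mc x] by simp
        then show "x \<le> m - 1/2^p" using c1(2) 0 c_def by simp
      qed
      moreover have "rv c = []" using ec True c_def by (simp add: rv_def)
      ultimately show ?thesis using c1 0 mult_dyadic[OF mc] c_def
        by (intro exI[of _ c]) auto
    next
      case False
      define c where "c = (of_int (n + 1) :: rat)"
      have mc: "mult 0 c" unfolding mult_def c_def by (rule exI[of _ "n+1"]) simp
      have ec: "expo c = 0" using expo_le[OF mc] by simp
      have "\<forall>x\<in>set (rv c). m + 1/2^p \<le> x"
      proof
        fix x assume x: "x \<in> set (rv c)"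
        have "c + 1 \<le> x" using rv_bound[OF mult_dyadic[OF mc] mc x] by simp
        then show "m + 1/2^p \<le> x" using c2(1) 0 c_def by simp
      qed
      moreover have "lv c = []" using ec False c_def by (simp add: lv_def)
      ultimately show ?thesis using c2 0 mult_dyadic[OF mc] c_def
        by (intro exI[of _ c]) auto
    qed
  next
    case (Suc p')
    have half: "(1::rat) / 2 ^ p' = 2 * (1 / 2 ^ p)" using Suc by simp
    obtain c where cc: "c = of_int n / 2^p \<or> c = of_int (n+1) / 2^p" and mc: "mult p' c"
    proof (cases "even n")
      case True
      then obtain h where "n = 2 * h" by blast
      then have "of_int n / 2^p = (of_int h / 2 ^ p' :: rat)" using Suc by simp
      then show ?thesis using that by (auto simp: mult_def)
    next
      case False
      have "n + 1 = 2 * ((n + 1) div 2)" using False by presburger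
      then obtain h where "n + 1 = 2 * h" by blast
      then have "of_int (n+1) / 2^p = (of_int h / 2 ^ p' :: rat)" using Suc by simp
      then show ?thesis using that by (auto simp: mult_def)
    qed
    have r: "m - 1/2^p < c" "c < m + 1/2^p" "c \<noteq> m" using cc c1 c2 by auto
    have "\<forall>x\<in>set (lv c). x \<le> m - 1/2^p"
    proof
      fix x assume x: "x \<in> set (lv c)"
      have "x \<le> c - 1/2^p'" using lv_bound[OF mult_dyadic[OF mc] mc x] .
      then show "x \<le> m - 1/2^p" using r(2) half by linarith
    qed
    moreover have "\<forall>x\<in>set (rv c). m + 1/2^p \<le> x"
    proof
      fix x assume x: "x \<in> set (rv c)"
      have "c + 1/2^p' \<le> x" using rv_bound[OF mult_dyadic[OF mc] mc x] .
      then show "m + 1/2^p \<le> x" using r(1) half by linarith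
    qed
    ultimately show ?thesis using r mult_dyadic[OF mc] by (intro exI[of _ c]) auto
  qed
qed

lemma bal_mult:
  assumes dm: "dyadic m"
    and b1: "gge (gsum (Game [canon (m - 1/2^p)] [canon (m + 1/2^p)]) (Game [canon (m - 1/2^p)] [canon (m + 1/2^p)])) (gsum (canon m) (canon m))"
    and b2: "gge (gsum (canon m) (canon m)) (gsum (Game [canon (m - 1/2^p)] [canon (m + 1/2^p)]) (Game [canon (m - 1/2^p)] [canon (m + 1/2^p)]))"
  shows "mult p m"
proof (rule ccontr)
  assume nm: "\<not> mult p m"
  define G where "G = Game [canon (m - 1/2^p)] [canon (m + 1/2^p)]"
  define M where "M = canon m"
  obtain c where c: "dyadic c" "c \<noteq> m" "m - 1/2^p < c" "c < m + 1/2^p"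
     "\<forall>x\<in>set (lv c). x \<le> m - 1/2^p" "\<forall>y\<in>set (rv c). m + 1/2^p \<le> y"
    using exists_c[OF dm nm] by blast
  define C where "C = canon c"
  have d: "mult p (1/2^p)" using mult_pow by simp
  have dm': "dyadic (m - 1/2^p)" "dyadic (m + 1/2^p)"
  proof -
    define j where "j = max p (expo m)"
    have a: "mult j m" using mult_mono[OF mult_expo[OF dm]] j_def by simp
    have b: "mult j (1/2^p)" using mult_pow j_def by simp
    show "dyadic (m - 1/2^p)" "dyadic (m + 1/2^p)"
      using mult_diff[OF a b] mult_add[OF a b] mult_dyadic by blast+
  qed
  have GC: "gge G C" "gge C G" using simp_eq[OF dm'(1) c(1) dm'(2) c(3,4,5,6)]
    unfolding G_def C_def by auto
  have GG1: "gge (gsum G G) (gsum C C)" using double_ge[OF GC(1)] .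
  have GG2: "gge (gsum C C) (gsum G G)" using double_ge[OF GC(2)] .
  have b1': "gge (gsum C C) (gsum M M)" using gge_trans[OF GG2 b1[folded G_def M_def]] .
  have b2': "gge (gsum M M) (gsum C C)" using gge_trans[OF b2[folded G_def M_def] GG1] .
  show False
  proof (cases "c < m")
    case True
    have h1: "gge M C" using canon_ge[OF dm c(1)] True unfolding M_def C_def by simp
    have h2: "\<not> gge C M" using canon_ge[OF c(1) dm] True unfolding M_def C_def by simp
    have "gge (gsum M M) (gsum M C)" using gsum_compat_left[of M M C] h1 by simp
    then have "gge (gsum C C) (gsum M C)" using gge_trans[OF b1'] by blast
    then have "gge C M" using gsum_compat[of C C M] by simp
    then show False using h2 by simp
  next
    case False
    then have lt: "m < c" using c(2) by simp
    have h1: "gge C M" using canon_ge[OF c(1) dm] lt unfolding M_def C_def by simp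
    have h2: "\<not> gge M C" using canon_ge[OF dm c(1)] lt unfolding M_def C_def by simp
    have "gge (gsum C C) (gsum C M)" using gsum_compat_left[of C C M] h1 by simp
    then have "gge (gsum M M) (gsum C M)" using gge_trans[OF b2'] by blast
    then have "gge M C" using gsum_compat[of M M C] by simp
    then show False using h2 by simp
  qed
qed

lemma notwinsF: "(\<not> wins False (gsum x (gneg y))) = gge x y" by (simp add: gge_def)

lemma zero_u_eq: "zero_u = Game [Game [] [Game [] []]] [Game [Game [] []] []]"
proof -
  have "canon 1 = intg 1" using canon_int[of 1] by simp
  then have "canon 1 = Game [Game [] []] []" by (simp add: intg_def)
  then show ?thesis by (simp add: zero_u_def)
qed

lemma not_mult_half: "\<not> mult p (1 / 2 ^ Suc p)"
proof
  assume "mult p (1 / 2 ^ Suc p)"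
  then obtain a where a: "(1::rat) / 2 ^ Suc p = of_int a / 2 ^ p" by (auto simp: mult_def)
  then have "(1::rat) = of_int a * 2" by (simp add: field_simps)
  then have "(1::int) = a * 2" by (metis of_int_1 of_int_eq_iff of_int_mult of_int_numeral)
  then show False by presburger
qed

lemma half_sum: "(1::rat) / 2 ^ Suc p + 1 / 2 ^ Suc p = 1 / 2 ^ p"
  by (simp add: field_simps)

lemma canon_mid:
  assumes mp: "mult p m"
  shows "canon (m - 1 / 2 ^ Suc p) = Game [canon (m - 1/2^p)] [canon m]"
        "canon (m + 1 / 2 ^ Suc p) = Game [canon m] [canon (m + 1/2^p)]"
proof -
  have mS: "mult (Suc p) m" using mult_mono[OF mp] by simp
  have e: "mult (Suc p) (1 / 2 ^ Suc p)" by (rule mult_pow) simp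
  have m1: "mult (Suc p) (m - 1 / 2 ^ Suc p)" using mult_diff[OF mS e] .
  have m2: "mult (Suc p) (m + 1 / 2 ^ Suc p)" using mult_add[OF mS e] .
  have n1: "\<not> mult p (m - 1 / 2 ^ Suc p)"
  proof
    assume "mult p (m - 1 / 2 ^ Suc p)"
    from mult_diff[OF mp this] have "mult p (1 / 2 ^ Suc p)" by simp
    then show False using not_mult_half by blast
  qed
  have n2: "\<not> mult p (m + 1 / 2 ^ Suc p)"
  proof
    assume "mult p (m + 1 / 2 ^ Suc p)"
    from mult_diff[OF this mp] have "mult p (1 / 2 ^ Suc p)" by simp
    then show False using not_mult_half by blast
  qed
  have d1: "dyadic (m - 1 / 2 ^ Suc p)" "dyadic (m + 1 / 2 ^ Suc p)"
    using m1 m2 mult_dyadic by blast+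
  have x1: "expo (m - 1 / 2 ^ Suc p) = Suc p"
    using mult_iff[OF d1(1)] m1 n1 by (meson le_SucE)
  have x2: "expo (m + 1 / 2 ^ Suc p) = Suc p"
    using mult_iff[OF d1(2)] m2 n2 by (meson le_SucE)
  have h: "m - 1 / 2 ^ Suc p - 1 / 2 ^ Suc p = m - 1 / 2 ^ p"
          "m + 1 / 2 ^ Suc p + 1 / 2 ^ Suc p = m + 1 / 2 ^ p"
    using half_sum[of p] by (simp_all add: algebra_simps)
  have l1: "lv (m - 1 / 2 ^ Suc p) = [m - 1 / 2 ^ Suc p - 1 / 2 ^ Suc p]" unfolding lv_def x1 by simp
  have r1: "rv (m - 1 / 2 ^ Suc p) = [m - 1 / 2 ^ Suc p + 1 / 2 ^ Suc p]" unfolding rv_def x1 by simp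
  have l2: "lv (m + 1 / 2 ^ Suc p) = [m + 1 / 2 ^ Suc p - 1 / 2 ^ Suc p]" unfolding lv_def x2 by simp
  have r2: "rv (m + 1 / 2 ^ Suc p) = [m + 1 / 2 ^ Suc p + 1 / 2 ^ Suc p]" unfolding rv_def x2 by simp
  have z: "m - 1 / 2 ^ Suc p + 1 / 2 ^ Suc p = m" "m + 1 / 2 ^ Suc p - 1 / 2 ^ Suc p = m" by simp_all
  show "canon (m - 1 / 2 ^ Suc p) = Game [canon (m - 1/2^p)] [canon m]"
    by (simp only: canon_struct[OF d1(1)] l1 r1 h z list.map)
  show "canon (m + 1 / 2 ^ Suc p) = Game [canon m] [canon (m + 1/2^p)]"
    by (simp only: canon_struct[OF d1(2)] l2 r2 h z list.map)
qed

theorem lemma3p3: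
  fixes m :: rat and p :: nat
  assumes "dyadic m"
    and "balanced m (- (1 / 2 ^ p))"
  shows "dom_equiv (osum (ball m (- (1 / 2 ^ p))) zero_u) (ball m (- (1 / 2 ^ Suc p)))
         \<and> balanced m (- (1 / 2 ^ Suc p))"
proof -
  define A where "A = canon (m - 1/2^p)"
  define B where "B = canon (m + 1/2^p)"
  define M where "M = canon m"
  define G where "G = Game [A] [B]"
  have ballp: "ball m (- (1 / 2 ^ p)) = G" by (simp add: ball_def G_def A_def B_def)
  have bal: "gge (gsum G G) (gsum M M)" "gge (gsum M M) (gsum G G)"
    using assms(2) unfolding balanced_def geq_def ballp M_def by auto
  have mp: "mult p m" using bal_mult[OF assms(1)] bal unfolding G_def A_def B_def M_def by blast
  have mS: "mult (Suc p) m" using mult_mono[OF mp] by simp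
  have GM: "gge G M" "gge M G" using ball_eq_m[OF mp] unfolding G_def A_def B_def M_def by auto
  have cm: "canon (m - 1 / 2 ^ Suc p) = Game [A] [M]" "canon (m + 1 / 2 ^ Suc p) = Game [M] [B]"
    using canon_mid[OF mp] unfolding A_def B_def M_def by auto
  define H where "H = Game [canon (m - 1 / 2 ^ Suc p)] [canon (m + 1 / 2 ^ Suc p)]"
  have ballS: "ball m (- (1 / 2 ^ Suc p)) = H" by (simp add: ball_def H_def)
  have HM: "gge H M" "gge M H" using ball_eq_m[OF mS] unfolding H_def M_def by auto
  have balS: "balanced m (- (1 / 2 ^ Suc p))"
    unfolding balanced_def geq_def ballS M_def[symmetric]
    using double_ge[OF HM(1)] double_ge[OF HM(2)] by simp
  define A' where "A' = canon (m - 1 / 2 ^ Suc p)"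
  define B' where "B' = canon (m + 1 / 2 ^ Suc p)"
  have HH: "H = Game [A'] [B']" by (simp add: H_def A'_def B'_def)
  have A'e: "A' = Game [A] [M]" and B'e: "B' = Game [M] [B]" using cm A'_def B'_def by auto
  define P where "P = Game [A] [B, G]"
  define Q where "Q = Game [A, G] [B]"
  have os: "osum G zero_u = Game [A, P] [B, Q]"
    by (simp add: zero_u_eq G_def P_def Q_def)
  have dm: "dyadic (m - 1/2^p)" "dyadic (m + 1/2^p)" "dyadic (m - 1 / 2 ^ Suc p)" "dyadic (m + 1 / 2 ^ Suc p)" "dyadic m"
  proof -
    have a: "mult (Suc p) (1/2^p)" "mult (Suc p) (1/2^Suc p)" by (rule mult_pow, simp)+
    show "dyadic (m - 1/2^p)" "dyadic (m + 1/2^p)" "dyadic (m - 1 / 2 ^ Suc p)" "dyadic (m + 1 / 2 ^ Suc p)" "dyadic m"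
      using mult_diff[OF mS a(1)] mult_add[OF mS a(1)] mult_diff[OF mS a(2)] mult_add[OF mS a(2)] mS
      mult_dyadic by blast+
  qed
  have pp: "(0::rat) < 1 / 2 ^ Suc p" "1 / 2 ^ Suc p < (1::rat) / 2 ^ p" by (simp_all add: field_simps)
  have c1: "gge A' A" unfolding A'_def A_def using canon_ge[OF dm(3) dm(1)] pp by simp
  have c2: "gge B B'" unfolding B'_def B_def using canon_ge[OF dm(2) dm(4)] pp by simp
  have c3: "\<not> gge A A'" unfolding A'_def A_def using canon_ge[OF dm(1) dm(3)] pp by simp
  have c4: "\<not> gge B' B" unfolding B'_def B_def using canon_ge[OF dm(4) dm(2)] pp by simp
  have c5: "\<not> gge A' B" unfolding A'_def B_def using canon_ge[OF dm(3) dm(2)] pp by simp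
  have c6: "\<not> gge A B'" unfolding A_def B'_def using canon_ge[OF dm(1) dm(4)] pp by simp
  have nPM: "\<not> gge P M" using GM(2) unfolding P_def by (subst gge_conway) simp
  have nMQ: "\<not> gge M Q" using GM(1) unfolding Q_def by (subst gge_conway) simp
  have nA'G: "\<not> gge A' G" using GM(1) unfolding A'e by (subst gge_conway) simp
  have nGB': "\<not> gge G B'" using GM(2) unfolding B'e by (subst gge_conway) simp
  have nAP: "\<not> gge A P" using gge_refl[of A] unfolding P_def by (subst gge_conway) simp
  have nQB: "\<not> gge Q B" using gge_refl[of B] unfolding Q_def by (subst gge_conway) simp
  have f2: "gge A' P" using nPM c3 unfolding A'e by (subst gge_conway) (simp add: P_def)
  have f5: "gge P A'" using c5 nA'G nAP unfolding A'e by (subst gge_conway) (simp add: P_def)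
  have f3: "gge B' Q" using nQB c6 nGB' unfolding B'e by (subst gge_conway) (simp add: Q_def)
  have f4: "gge Q B'" using c4 nMQ unfolding B'e by (subst gge_conway) (simp add: Q_def)
  have de: "dom_equiv (osum G zero_u) H"
    unfolding os HH dom_equiv_def using c1 c2 f2 f3 f4 f5 by (simp add: notwinsT notwinsF)
  show ?thesis using de balS ballp ballS by simp
qed

end
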